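(* Let $\mu$ be a finite signed Borel measure on a Borel set $C\subseteq\mathbb{R}$, let $\alpha\in\mathbb{R}$ and let $g$ be a complex-valued function on $C$; for each $z$ fix a value $g(z)^\alpha\in\mathbb{C}$ and put $r(k,z)=g(z)^{\alpha k}:=(g(z)^\alpha)^k$. Suppose $\phi:\mathbb{N}\cup\{0\}\to\mathbb{C}$ satisfies $\phi(k)=\int_C r(k,z)\,\mu(dz)$ for all $k\in\mathbb{N}\cup\{0\}$. Let $\gamma,\sigma:[a,b]\to V$ be continuous paths of bounded variation and set $a_k(s,t)=\langle S(\gamma)^k_{a,s},S(\sigma)^k_{a,t}\rangle_k$. Assume that for every $(s,t)\in[a,b]^2$: (1) $\int_C|r(k,z)|\,|\mu|(dz)<\infty$ for every $k$, and (2) the series $\sum_k a_k(s,t)\int_C|r(k,z)|\,|\mu|(dz)$ converges absolutely. Then for every $(s,t)\in[a,b]^2$, \[ \langle S(\gamma)_{a,s},S(\sigma)_{a,t}\rangle_\phi=\int_C K^{g(z)^\alpha\gamma,\sigma}(s,t)\,\mu(dz). \]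
   Context: $V$ is a finite-dimensional real inner product space, $\langle\cdot,\cdot\rangle_k$ the induced Hilbert–Schmidt inner product on $V^{\otimes k}$. Signature: $S(\gamma)^0=1$, $S(\gamma)^k_{s,t}=\int_{s<u_1<\dots<u_k<t}d\gamma_{u_1}\otimes\cdots\otimes d\gamma_{u_k}$. For complex $\phi$, $\langle S(\gamma)_{a,s},S(\sigma)_{a,t}\rangle_\phi:=\sum_{k\ge0}\phi(k)a_k(s,t)$. For $w\in\mathbb{C}$, the (original) signature kernel of the rescaled path is $K^{w\gamma,\sigma}(s,t):=\sum_{k\ge0}w^k a_k(s,t)$. $|\mu|$ denotes the total variation measure. *)

theory Defs
  imports "HOL-Probability.Probability"
begin

definition bounded_variation_on :: "(real \<Rightarrow> 'v::real_normed_vector) \<Rightarrow> real \<Rightarrow> real \<Rightarrow> bool" where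
  "bounded_variation_on \<gamma> a b \<longleftrightarrow>
     bdd_above {(\<Sum>j<n. norm (\<gamma> (x (Suc j)) - \<gamma> (x j))) | n x.
                 x 0 = a \<and> x n = b \<and> (\<forall>j<n. x j \<le> x (Suc j))}"

definition RS_has_integral :: "(real \<Rightarrow> real) \<Rightarrow> (real \<Rightarrow> real) \<Rightarrow> real \<Rightarrow> real \<Rightarrow> real \<Rightarrow> bool" where
  "RS_has_integral f g s t I \<longleftrightarrow>
     (\<forall>\<epsilon>>0. \<exists>\<delta>>0. \<forall>n x \<xi>. x 0 = s \<and> x n = t \<and>
        (\<forall>j<n. x j \<le> \<xi> j \<and> \<xi> j \<le> x (Suc j) \<and> x (Suc j) - x j < \<delta>) \<longrightarrow>
        \<bar>(\<Sum>j<n. f (\<xi> j) * (g (x (Suc j)) - g (x j))) - I\<bar> < \<epsilon>)"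

definition RS_integral :: "(real \<Rightarrow> real) \<Rightarrow> (real \<Rightarrow> real) \<Rightarrow> real \<Rightarrow> real \<Rightarrow> real" where
  "RS_integral f g s t = (THE I. RS_has_integral f g s t I)"

text \<open>Coordinates of the level-k signature S(gamma)^k_{a,t} w.r.t. the orthonormal basis
  e_{i_1} \<otimes> ... \<otimes> e_{i_k} of V^{\<otimes> k} (e_i ranging over Basis).  Words are stored
  REVERSED: the head of the list is the last letter i_k, so that
  sig_coeff gamma a (i # w) t = int_a^t sig_coeff gamma a w u d(gamma_u . i).\<close>
fun sig_coeff :: "(real \<Rightarrow> 'v::euclidean_space) \<Rightarrow> real \<Rightarrow> 'v list \<Rightarrow> real \<Rightarrow> real" where
  "sig_coeff \<gamma> a [] t = 1"
| "sig_coeff \<gamma> a (i # w) t = RS_integral (\<lambda>u. sig_coeff \<gamma> a w u) (\<lambda>u. \<gamma> u \<bullet> i) a t"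

definition sig_inner :: "(real \<Rightarrow> 'v::euclidean_space) \<Rightarrow> (real \<Rightarrow> 'v) \<Rightarrow> real \<Rightarrow> nat \<Rightarrow> real \<Rightarrow> real \<Rightarrow> real" where
  "sig_inner \<gamma> \<sigma> a k s t =
     (\<Sum>w\<in>{w. length w = k \<and> set w \<subseteq> Basis}. sig_coeff \<gamma> a w s * sig_coeff \<sigma> a w t)"

definition phi_sig_kernel :: "(nat \<Rightarrow> complex) \<Rightarrow> (real \<Rightarrow> 'v::euclidean_space) \<Rightarrow> (real \<Rightarrow> 'v) \<Rightarrow> real \<Rightarrow> real \<Rightarrow> real \<Rightarrow> complex" where
  "phi_sig_kernel \<phi> \<gamma> \<sigma> a s t = (\<Sum>k. \<phi> k * complex_of_real (sig_inner \<gamma> \<sigma> a k s t))"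

text \<open>Signature kernel of the rescaled path: K^{w gamma, sigma}(s,t) = sum_k w^k a_k(s,t).\<close>
definition sig_kernel_scaled :: "complex \<Rightarrow> (real \<Rightarrow> 'v::euclidean_space) \<Rightarrow> (real \<Rightarrow> 'v) \<Rightarrow> real \<Rightarrow> real \<Rightarrow> real \<Rightarrow> complex" where
  "sig_kernel_scaled w \<gamma> \<sigma> a s t = (\<Sum>k. w ^ k * complex_of_real (sig_inner \<gamma> \<sigma> a k s t))"

end

theory Submission
  imports Defs
begin

lemma series_integral_key:
  fixes f :: "nat \<Rightarrow> 'a \<Rightarrow> complex"
  assumes int: "\<And>i. integrable M (f i)"
    and sm: "summable (\<lambda>i. (\<integral>x. norm (f i x) \<partial>M))"
  shows "(\<lambda>i. integral\<^sup>L M (f i)) sums (\<integral>x. (\<Sum>i. f i x) \<partial>M)"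
proof (rule sums_integral[OF int _ sm])
  have meas: "(\<lambda>x. \<Sum>i. ennreal (norm (f i x))) \<in> borel_measurable M"
    using int by measurable
  have "(\<integral>\<^sup>+ x. (\<Sum>i. ennreal (norm (f i x))) \<partial>M) = (\<Sum>i. \<integral>\<^sup>+ x. norm (f i x) \<partial>M)"
    using int by (intro nn_integral_suminf) auto
  also have "\<dots> = (\<Sum>i. ennreal (\<integral>x. norm (f i x) \<partial>M))"
    by (intro arg_cong[where f=suminf] ext nn_integral_eq_integral integrable_norm int) auto
  also have "\<dots> \<noteq> top"
    by (rule ennreal_suminf_neq_top[OF sm]) auto
  finally have fin: "(\<integral>\<^sup>+ x. (\<Sum>i. ennreal (norm (f i x))) \<partial>M) \<noteq> top" .
  have fin': "(\<integral>\<^sup>+ x. (\<Sum>i. ennreal (norm (f i x))) \<partial>M) \<noteq> \<infinity>"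
    unfolding infinity_ennreal_def by (rule fin)
  have ae: "AE x in M. (\<Sum>i. ennreal (norm (f i x))) \<noteq> \<infinity>"
    by (rule nn_integral_PInf_AE[OF meas fin'])
  show "AE x in M. summable (\<lambda>i. norm (f i x))"
  proof (rule AE_mp[OF ae], rule AE_I2, rule impI)
    fix x assume "(\<Sum>i. ennreal (norm (f i x))) \<noteq> \<infinity>"
    then have "(\<Sum>i. ennreal (norm (f i x))) \<noteq> top" unfolding infinity_ennreal_def .
    then show "summable (\<lambda>i. norm (f i x))"
      by (rule summable_suminf_not_top[rotated]) simp
  qed
qed

theorem mainTheorem3:
  fixes C :: "real set" and Mp Mn :: "real measure" and \<alpha> :: real
    and g ga :: "real \<Rightarrow> complex" and \<phi> :: "nat \<Rightarrow> complex"
    and \<gamma> \<sigma> :: "real \<Rightarrow> 'v::euclidean_space" and a b :: real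
  assumes C_borel: "C \<in> sets borel"
    and Mp_borel: "sets Mp = sets (restrict_space borel C)"
    and Mn_borel: "sets Mn = sets (restrict_space borel C)"
    and Mp_fin: "finite_measure Mp" and Mn_fin: "finite_measure Mn"
    and singular: "\<exists>A \<in> sets (restrict_space borel C). emeasure Mp (C - A) = 0 \<and> emeasure Mn A = 0"
    and ga_meas: "ga \<in> borel_measurable (restrict_space borel C)"
    and ga_pow: "\<forall>z\<in>C. g z \<noteq> 0 \<longrightarrow> (\<exists>L. exp L = g z \<and> ga z = exp (complex_of_real \<alpha> * L))"
    and phi_def: "\<forall>k. \<phi> k = (CLINT z|Mp. ga z ^ k) - (CLINT z|Mn. ga z ^ k)"
    and \<gamma>_cont: "continuous_on {a..b} \<gamma>" and \<gamma>_bv: "bounded_variation_on \<gamma> a b"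
    and \<sigma>_cont: "continuous_on {a..b} \<sigma>" and \<sigma>_bv: "bounded_variation_on \<sigma> a b"
    and fin_int: "\<forall>s\<in>{a..b}. \<forall>t\<in>{a..b}. \<forall>k.
          (\<integral>\<^sup>+ z. ennreal (norm (ga z ^ k)) \<partial>Mp) < \<infinity> \<and> (\<integral>\<^sup>+ z. ennreal (norm (ga z ^ k)) \<partial>Mn) < \<infinity>"
    and abs_conv: "\<forall>s\<in>{a..b}. \<forall>t\<in>{a..b}.
          summable (\<lambda>k. \<bar>sig_inner \<gamma> \<sigma> a k s t *
             ((\<integral>z. norm (ga z ^ k) \<partial>Mp) + (\<integral>z. norm (ga z ^ k) \<partial>Mn))\<bar>)"
  shows "\<forall>s\<in>{a..b}. \<forall>t\<in>{a..b}.
           phi_sig_kernel \<phi> \<gamma> \<sigma> a s t =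
             (CLINT z|Mp. sig_kernel_scaled (ga z) \<gamma> \<sigma> a s t)
             - (CLINT z|Mn. sig_kernel_scaled (ga z) \<gamma> \<sigma> a s t)"
proof (intro ballI)
  fix s t assume s: "s \<in> {a..b}" and t: "t \<in> {a..b}"
  define A where "A k = sig_inner \<gamma> \<sigma> a k s t" for k
  have gmp: "ga \<in> borel_measurable Mp" using ga_meas by (simp add: measurable_cong_sets[OF Mp_borel refl])
  have gmn: "ga \<in> borel_measurable Mn" using ga_meas by (simp add: measurable_cong_sets[OF Mn_borel refl])
  have intp: "integrable Mp (\<lambda>z. ga z ^ k)" for k
  proof (rule integrableI_bounded)
    show "(\<lambda>z. ga z ^ k) \<in> borel_measurable Mp" by (rule borel_measurable_power[OF gmp])
    show "(\<integral>\<^sup>+ z. ennreal (norm (ga z ^ k)) \<partial>Mp) < \<infinity>" by (rule conjunct1[OF spec[OF bspec[OF bspec[OF fin_int s] t], of k]])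
  qed
  have intn: "integrable Mn (\<lambda>z. ga z ^ k)" for k
  proof (rule integrableI_bounded)
    show "(\<lambda>z. ga z ^ k) \<in> borel_measurable Mn" by (rule borel_measurable_power[OF gmn])
    show "(\<integral>\<^sup>+ z. ennreal (norm (ga z ^ k)) \<partial>Mn) < \<infinity>" by (rule conjunct2[OF spec[OF bspec[OF bspec[OF fin_int s] t], of k]])
  qed
  have sabs: "summable (\<lambda>k. \<bar>A k * ((\<integral>z. norm (ga z ^ k) \<partial>Mp) + (\<integral>z. norm (ga z ^ k) \<partial>Mn))\<bar>)"
    unfolding A_def by (rule bspec[OF bspec[OF abs_conv s] t])
  have np: "(\<integral>z. norm (ga z ^ k * complex_of_real (A k)) \<partial>Mp) = \<bar>A k\<bar> * (\<integral>z. norm (ga z ^ k) \<partial>Mp)" for k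
    proof -
    have "(\<lambda>z. norm (ga z ^ k * complex_of_real (A k))) = (\<lambda>z. \<bar>A k\<bar> * norm (ga z ^ k))"
      by (rule ext) (simp only: norm_mult norm_of_real mult.commute)
    then show ?thesis by (simp only: integral_mult_right_zero)
  qed
  have nn: "(\<integral>z. norm (ga z ^ k * complex_of_real (A k)) \<partial>Mn) = \<bar>A k\<bar> * (\<integral>z. norm (ga z ^ k) \<partial>Mn)" for k
    proof -
    have "(\<lambda>z. norm (ga z ^ k * complex_of_real (A k))) = (\<lambda>z. \<bar>A k\<bar> * norm (ga z ^ k))"
      by (rule ext) (simp only: norm_mult norm_of_real mult.commute)
    then show ?thesis by (simp only: integral_mult_right_zero)
  qed
  have smp: "summable (\<lambda>k. (\<integral>z. norm (ga z ^ k * complex_of_real (A k)) \<partial>Mp))"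
    unfolding np
  proof (rule summable_comparison_test'[OF sabs])
    fix k
    have "0 \<le> (\<integral>z. norm (ga z ^ k) \<partial>Mp)" "0 \<le> (\<integral>z. norm (ga z ^ k) \<partial>Mn)" by auto
    then show "norm (\<bar>A k\<bar> * (\<integral>z. norm (ga z ^ k) \<partial>Mp)) \<le> \<bar>A k * ((\<integral>z. norm (ga z ^ k) \<partial>Mp) + (\<integral>z. norm (ga z ^ k) \<partial>Mn))\<bar>"
      by (simp add: abs_mult mult_left_mono)
  qed
  have smn: "summable (\<lambda>k. (\<integral>z. norm (ga z ^ k * complex_of_real (A k)) \<partial>Mn))"
    unfolding nn
  proof (rule summable_comparison_test'[OF sabs])
    fix k
    have "0 \<le> (\<integral>z. norm (ga z ^ k) \<partial>Mp)" "0 \<le> (\<integral>z. norm (ga z ^ k) \<partial>Mn)" by auto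
    then show "norm (\<bar>A k\<bar> * (\<integral>z. norm (ga z ^ k) \<partial>Mn)) \<le> \<bar>A k * ((\<integral>z. norm (ga z ^ k) \<partial>Mp) + (\<integral>z. norm (ga z ^ k) \<partial>Mn))\<bar>"
      by (simp add: abs_mult mult_left_mono)
  qed
  have Sp: "(\<lambda>k. integral\<^sup>L Mp (\<lambda>z. ga z ^ k * complex_of_real (A k))) sums (CLINT z|Mp. sig_kernel_scaled (ga z) \<gamma> \<sigma> a s t)"
    unfolding sig_kernel_scaled_def A_def[symmetric]
    by (rule series_integral_key[OF _ smp]) (intro integrable_mult_left intp)
  have Sn: "(\<lambda>k. integral\<^sup>L Mn (\<lambda>z. ga z ^ k * complex_of_real (A k))) sums (CLINT z|Mn. sig_kernel_scaled (ga z) \<gamma> \<sigma> a s t)"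
    unfolding sig_kernel_scaled_def A_def[symmetric]
    by (rule series_integral_key[OF _ smn]) (intro integrable_mult_left intn)
  have "(\<lambda>k. \<phi> k * complex_of_real (A k)) sums ((CLINT z|Mp. sig_kernel_scaled (ga z) \<gamma> \<sigma> a s t)
             - (CLINT z|Mn. sig_kernel_scaled (ga z) \<gamma> \<sigma> a s t))"
  proof -
    have "(\<lambda>k. \<phi> k * complex_of_real (A k)) = (\<lambda>k. integral\<^sup>L Mp (\<lambda>z. ga z ^ k * complex_of_real (A k)) - integral\<^sup>L Mn (\<lambda>z. ga z ^ k * complex_of_real (A k)))"
      by (rule ext) (simp only: phi_def integral_mult_left_zero left_diff_distrib)
    then show ?thesis using sums_diff[OF Sp Sn] by simp
  qed
  then show "phi_sig_kernel \<phi> \<gamma> \<sigma> a s t =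
             (CLINT z|Mp. sig_kernel_scaled (ga z) \<gamma> \<sigma> a s t)
             - (CLINT z|Mn. sig_kernel_scaled (ga z) \<gamma> \<sigma> a s t)"
    unfolding phi_sig_kernel_def A_def[symmetric] by (rule sums_unique[symmetric])
qed

end
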